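(* Let $g\in C^{0,1}(\mathbb R)$ be monotonically increasing with Lipschitz constant $g_{\rm Lip}$, and let $\mathcal T_h$ consist of non-obtuse simplices only. Then for all $q\in Q^1_h$ and all $\phi\in S^1_h$, on every simplex $K\in\mathcal T_h$, $$g_{\rm Lip}\,\nabla\pi_h[g(q)]\cdot\nabla q\ge\|\nabla\pi_h[g(q)]\|^2\qquad\text{and}\qquad g_{\rm Lip}\,\nabla\pi_h[g(\phi)]::\nabla\phi\ge\|\nabla\pi_h[g(\phi)]\|^2 .$$
   Context: $D\subset\mathbb R^d$ ($d\in\{2,3\}$) a bounded polytope; $\mathcal T_h$ a conforming partition of $D$ into simplices, non-obtuse meaning all dihedral angles of every simplex are at most $\pi/2$. $Q^1_h$: continuous piecewise linear scalar functions on $\mathcal T_h$; $S^1_h$: continuous piecewise linear symmetric-matrix-valued functions. $\pi_h$: nodal interpolation onto continuous piecewise linears at the vertices of $\mathcal T_h$ (entrywise for matrices). For a symmetric matrix $\phi=O^TDO$ ($O$ orthogonal, $D$ diagonal), $g(\phi):=O^Tg(D)O$ with $g(D)$ diagonal with entries $g(D_{ii})$; this is applied pointwise. For matrix fields, $\nabla\phi::\nabla\psi=\sum_{i,j}\nabla\phi_{ij}\cdot\nabla\psi_{ij}$ and $\|\nabla\phi\|^2=\nabla\phi::\nabla\phi$. *)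

theory Defs
  imports "HOL-Analysis.Analysis"
begin

text \<open>A simplex of the mesh is represented by its (finite, affinely independent) vertex set S;
  the closed simplex is convex hull S.\<close>

definition is_simplex_vertices :: "(real^'n) set \<Rightarrow> bool" where
  "is_simplex_vertices S \<longleftrightarrow> finite S \<and> card S = CARD('n) + 1 \<and> \<not> affine_dependent S"

definition conforming_mesh :: "(real^'n) set set \<Rightarrow> (real^'n) set \<Rightarrow> bool" where
  "conforming_mesh T D \<longleftrightarrow> finite T \<and> T \<noteq> {} \<and> (\<forall>S\<in>T. is_simplex_vertices S)
     \<and> D = (\<Union>S\<in>T. convex hull S)
     \<and> (\<forall>S1\<in>T. \<forall>S2\<in>T. convex hull S1 \<inter> convex hull S2 = convex hull (S1 \<inter> S2))"

definition mesh_vertices :: "(real^'n) set set \<Rightarrow> (real^'n) set" where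
  "mesh_vertices T = \<Union>T"

definition facet_normal :: "(real^'n) set \<Rightarrow> real^'n \<Rightarrow> real^'n" where
  "facet_normal S v = (SOME n. norm n = 1
      \<and> (\<forall>a\<in>S - {v}. \<forall>b\<in>S - {v}. n \<bullet> (a - b) = 0)
      \<and> (\<forall>a\<in>S - {v}. n \<bullet> (v - a) < 0))"

text \<open>Interior dihedral angle between the facets opposite to v and w.\<close>

definition dihedral_angle :: "(real^'n) set \<Rightarrow> real^'n \<Rightarrow> real^'n \<Rightarrow> real" where
  "dihedral_angle S v w = pi - arccos (facet_normal S v \<bullet> facet_normal S w)"

definition non_obtuse_mesh :: "(real^'n) set set \<Rightarrow> bool" where
  "non_obtuse_mesh T \<longleftrightarrow> (\<forall>S\<in>T. \<forall>v\<in>S. \<forall>w\<in>S. v \<noteq> w \<longrightarrow> dihedral_angle S v w \<le> pi / 2)"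

definition Q1 :: "(real^'n) set set \<Rightarrow> (real^'n) set \<Rightarrow> (real^'n \<Rightarrow> real) set" where
  "Q1 T D = {q. continuous_on D q \<and>
      (\<forall>S\<in>T. \<exists>a c. \<forall>x\<in>convex hull S. q x = a \<bullet> x + c)}"

definition grad_on :: "(real^'n) set \<Rightarrow> (real^'n \<Rightarrow> real) \<Rightarrow> real^'n" where
  "grad_on S f = (THE a. \<exists>c. \<forall>x\<in>convex hull S. f x = a \<bullet> x + c)"

text \<open>Nodal interpolation onto Q^1_h (convention: the interpolant vanishes outside D).\<close>

definition nodal_interp :: "(real^'n) set set \<Rightarrow> (real^'n) set \<Rightarrow> (real^'n \<Rightarrow> real) \<Rightarrow> (real^'n \<Rightarrow> real)" where
  "nodal_interp T D u = (THE w. w \<in> Q1 T D \<and> (\<forall>v\<in>mesh_vertices T. w v = u v)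
      \<and> (\<forall>x. x \<notin> D \<longrightarrow> w x = 0))"

definition nodal_interp_mat ::
  "(real^'n) set set \<Rightarrow> (real^'n) set \<Rightarrow> (real^'n \<Rightarrow> real^'m^'m) \<Rightarrow> (real^'n \<Rightarrow> real^'m^'m)" where
  "nodal_interp_mat T D U = (\<lambda>x. \<chi> i j. nodal_interp T D (\<lambda>y. U y $ i $ j) x)"

definition symmetric_mat :: "real^'m^'m \<Rightarrow> bool" where
  "symmetric_mat A \<longleftrightarrow> transpose A = A"

definition diagonal_mat :: "real^'m^'m \<Rightarrow> bool" where
  "diagonal_mat A \<longleftrightarrow> (\<forall>i j. i \<noteq> j \<longrightarrow> A $ i $ j = 0)"

definition S1 :: "(real^'n) set set \<Rightarrow> (real^'n) set \<Rightarrow> (real^'n \<Rightarrow> real^'m^'m) set" where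
  "S1 T D = {\<phi>. (\<forall>i j. (\<lambda>x. \<phi> x $ i $ j) \<in> Q1 T D) \<and> (\<forall>x\<in>D. symmetric_mat (\<phi> x))}"

definition mat_fun :: "(real \<Rightarrow> real) \<Rightarrow> real^'m^'m \<Rightarrow> real^'m^'m" where
  "mat_fun g A = (SOME B. \<exists>Q Dg. orthogonal_matrix Q \<and> diagonal_mat Dg
       \<and> A = transpose Q ** Dg ** Q
       \<and> B = transpose Q ** (\<chi> i j. if i = j then g (Dg $ i $ i) else 0) ** Q)"

definition mat_grad_inner ::
  "(real^'n) set \<Rightarrow> (real^'n \<Rightarrow> real^'m^'m) \<Rightarrow> (real^'n \<Rightarrow> real^'m^'m) \<Rightarrow> real" where
  "mat_grad_inner S \<phi> \<psi> = (\<Sum>i\<in>UNIV. \<Sum>j\<in>UNIV.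
      grad_on S (\<lambda>x. \<phi> x $ i $ j) \<bullet> grad_on S (\<lambda>x. \<psi> x $ i $ j))"

end

theory Submission
  imports Defs
begin


lemma sym_dot:
  fixes A :: "real^'m^'m"
  assumes "transpose A = A"
  shows "x \<bullet> (A *v y) = (A *v x) \<bullet> y"
  by (metis assms dot_lmul_matrix inner_commute transpose_matrix_vector)


lemma max_eigen:
  fixes A :: "real^'m^'m" and x0 y :: "real^'m" and lam :: real
  assumes sym: "transpose A = A"
    and max: "\<And>t::real. (x0 + t *\<^sub>R y) \<bullet> (A *v (x0 + t *\<^sub>R y)) \<le> lam * ((x0 + t *\<^sub>R y) \<bullet> (x0 + t *\<^sub>R y))"
    and y: "y = A *v x0 - lam *\<^sub>R x0"
    and n1: "x0 \<bullet> x0 = 1" and lamdef: "lam = x0 \<bullet> (A *v x0)"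
  shows "y = 0"
proof (rule ccontr)
  assume "y \<noteq> 0"
  hence yy: "y \<bullet> y > 0" by simp
  have yx: "y \<bullet> x0 = 0" using n1 lamdef unfolding y by (simp add: inner_diff_left inner_commute[of "A *v x0" x0])
  have yAx: "y \<bullet> (A *v x0) = y \<bullet> y" using y yx by (simp add: inner_diff_right inner_diff_left)
  have xAy: "x0 \<bullet> (A *v y) = y \<bullet> y" using sym_dot[OF sym, of x0 y] yAx by (simp add: inner_commute)
  define C where "C = \<bar>lam * (y \<bullet> y) - y \<bullet> (A *v y)\<bar>"
  define t where "t = (y \<bullet> y) / (C + 1)"
  have C0: "C \<ge> 0" by (simp add: C_def)
  have t0: "t > 0" using yy C0 by (simp add: t_def)
  have "(x0 + t *\<^sub>R y) \<bullet> (A *v (x0 + t *\<^sub>R y)) = lam + 2*t*(y \<bullet> y) + t*t*(y \<bullet> (A *v y))"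
    by (simp add: matrix_vector_right_distrib inner_add_left inner_add_right lamdef xAy yAx algebra_simps)
  moreover have "(x0 + t *\<^sub>R y) \<bullet> (x0 + t *\<^sub>R y) = 1 + t*t*(y \<bullet> y)"
    using yx by (simp add: inner_add_left inner_add_right n1 inner_commute[of x0 y] algebra_simps)
  ultimately have "lam + 2*t*(y \<bullet> y) + t*t*(y \<bullet> (A *v y)) \<le> lam * (1 + t*t*(y \<bullet> y))"
    using max[of t] by simp
  hence "2*t*(y \<bullet> y) \<le> t*t*(lam * (y \<bullet> y) - y \<bullet> (A *v y))" by (simp add: algebra_simps)
  also have "\<dots> \<le> t*t*C" using t0 by (intro mult_left_mono) (auto simp: C_def)
  finally have "2*(y \<bullet> y) \<le> t*C" using t0 by (simp add: power2_eq_square mult.assoc)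
  also have "t*C = (y \<bullet> y) * (C/(C+1))" by (simp add: t_def)
  also have "\<dots> \<le> (y \<bullet> y)" using yy C0 by (intro mult_left_le) auto
  finally show False using yy by simp
qed


lemma rayleigh_bound:
  fixes A :: "real^'m^'m" and V :: "(real^'m) set"
  assumes x0K: "x0 \<in> {x. norm x = 1 \<and> (\<forall>v\<in>V. v \<bullet> x = 0)}"
    and mx: "\<forall>y\<in>{x. norm x = 1 \<and> (\<forall>v\<in>V. v \<bullet> x = 0)}. y \<bullet> (A *v y) \<le> x0 \<bullet> (A *v x0)"
    and zW: "\<forall>v\<in>V. v \<bullet> z = 0"
  shows "z \<bullet> (A *v z) \<le> (x0 \<bullet> (A *v x0)) * (z \<bullet> z)"
proof (cases "z = 0")
  case True then show ?thesis by simp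
next
  case False
  define u where "u = (1 / norm z) *\<^sub>R z"
  have "u \<in> {x. norm x = 1 \<and> (\<forall>v\<in>V. v \<bullet> x = 0)}" using False zW by (simp add: u_def)
  hence "u \<bullet> (A *v u) \<le> x0 \<bullet> (A *v x0)" using mx by blast
  moreover have "u \<bullet> (A *v u) = (z \<bullet> (A *v z)) / (norm z)^2"
    by (simp add: u_def matrix_vector_mult_scaleR power2_eq_square)
  ultimately have "(z \<bullet> (A *v z)) / (z \<bullet> z) \<le> x0 \<bullet> (A *v x0)" by (simp add: power2_norm_eq_inner)
  moreover have "z \<bullet> z > 0" using False by simp
  ultimately show ?thesis by (simp add: divide_le_eq mult.commute)
qed

lemma eigen_orthonormal:
  fixes A :: "real^'m^'m"
  assumes sym: "transpose A = A"
  shows "k \<le> CARD('m) \<Longrightarrow> \<exists>V. finite V \<and> card V = k \<and> (\<forall>v\<in>V. v \<bullet> v = 1 \<and> (\<exists>l. A *v v = l *\<^sub>R v))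
           \<and> (\<forall>v\<in>V. \<forall>w\<in>V. v \<noteq> w \<longrightarrow> v \<bullet> w = 0)"
proof (induction k)
  case 0
  show ?case by (rule exI[of _ "{}"]) simp
next
  case (Suc k)
  then obtain V where V: "finite V" "card V = k" "\<forall>v\<in>V. v \<bullet> v = 1 \<and> (\<exists>l. A *v v = l *\<^sub>R v)"
     "\<forall>v\<in>V. \<forall>w\<in>V. v \<noteq> w \<longrightarrow> v \<bullet> w = 0" by auto
  have "dim V < DIM(real^'m)" using V Suc.prems
    by (metis DIM_cart DIM_real Suc_le_lessD dim_le_card' le_less_trans nat_mult_1_right)
  then obtain x where x: "x \<noteq> 0" "\<And>y. y \<in> span V \<Longrightarrow> orthogonal x y"
    using orthogonal_to_subspace_exists by blast
  define K where "K = {x. norm x = 1 \<and> (\<forall>v\<in>V. v \<bullet> x = 0)}"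
  have Keq: "K = sphere 0 1 \<inter> (\<Inter>v\<in>V. {x. v \<bullet> x = 0})" by (auto simp: K_def)
  have "compact K" unfolding Keq
    by (intro compact_Int_closed compact_sphere closed_INT ballI closed_hyperplane)
  moreover have "(1 / norm x) *\<^sub>R x \<in> K" using x by (auto simp: K_def orthogonal_def span_base inner_commute)
  hence "K \<noteq> {}" by auto
  moreover have "continuous_on K (\<lambda>y. y \<bullet> (A *v y))"
    by (intro continuous_intros linear_continuous_on matrix_vector_mul_bounded_linear)
  ultimately obtain x0 where x0: "x0 \<in> K" "\<forall>y\<in>K. y \<bullet> (A *v y) \<le> x0 \<bullet> (A *v x0)"
    using continuous_attains_sup by blast
  define lam where "lam = x0 \<bullet> (A *v x0)"
  define y where "y = A *v x0 - lam *\<^sub>R x0"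
  have n1: "x0 \<bullet> x0 = 1" using x0 by (simp add: K_def norm_eq_1)
  have yW: "\<forall>v\<in>V. v \<bullet> y = 0"
  proof
    fix v assume vV: "v \<in> V"
    then obtain l where l: "A *v v = l *\<^sub>R v" using V by blast
    have "v \<bullet> (A *v x0) = (A *v v) \<bullet> x0" using sym_dot[OF sym] by blast
    also have "\<dots> = 0" using l x0 vV by (simp add: K_def)
    finally show "v \<bullet> y = 0" using x0 vV by (simp add: y_def K_def inner_diff_right)
  qed
  have "y = 0"
  proof (rule max_eigen[OF sym _ y_def n1 lam_def])
    fix t :: real
    have "\<forall>v\<in>V. v \<bullet> (x0 + t *\<^sub>R y) = 0" using yW x0 by (simp add: K_def inner_add_right)
    then show "(x0 + t *\<^sub>R y) \<bullet> (A *v (x0 + t *\<^sub>R y)) \<le> lam * ((x0 + t *\<^sub>R y) \<bullet> (x0 + t *\<^sub>R y))"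
      using rayleigh_bound[of x0 V A] x0 unfolding K_def lam_def by blast
  qed
  hence eig: "A *v x0 = lam *\<^sub>R x0" by (simp add: y_def)
  have x0V: "x0 \<notin> V" using x0 n1 by (auto simp: K_def)
  show ?case
  proof (intro exI[of _ "insert x0 V"] conjI)
    show "finite (insert x0 V)" using V by simp
    show "card (insert x0 V) = Suc k" using V x0V by simp
    show "\<forall>v\<in>insert x0 V. v \<bullet> v = 1 \<and> (\<exists>l. A *v v = l *\<^sub>R v)" using V n1 eig by auto
    show "\<forall>v\<in>insert x0 V. \<forall>w\<in>insert x0 V. v \<noteq> w \<longrightarrow> v \<bullet> w = 0"
      using V x0 by (auto simp: K_def inner_commute)
  qed
qed


lemma spectral:
  fixes A :: "real^'m^'m"
  assumes sym: "transpose A = A"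
  shows "\<exists>Q Dg. orthogonal_matrix Q \<and> diagonal_mat Dg \<and> A = transpose Q ** Dg ** Q"
proof -
  obtain V where V: "finite V" "card V = CARD('m)" "\<forall>v\<in>V. v \<bullet> v = 1 \<and> (\<exists>l. A *v v = l *\<^sub>R v)"
     "\<forall>v\<in>V. \<forall>w\<in>V. v \<noteq> w \<longrightarrow> v \<bullet> w = 0"
    using eigen_orthonormal[OF sym, of "CARD('m)"] by auto
  obtain h where h: "bij_betw h (UNIV::'m set) V"
    using finite_same_card_bij[of "UNIV::'m set" V] V by auto
  define lam where "lam v = (SOME l. A *v v = l *\<^sub>R v)" for v
  have eig: "A *v h p = lam (h p) *\<^sub>R h p" for p
  proof -
    have "h p \<in> V" using h bij_betwE by blast
    then obtain l where "A *v h p = l *\<^sub>R h p" using V by blast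
    then show ?thesis unfolding lam_def by (rule someI)
  qed
  have orth: "h p \<bullet> h q = (if p = q then 1 else 0)" for p q
  proof -
    have "h p \<in> V" "h q \<in> V" using h bij_betwE by blast+
    moreover have "p \<noteq> q \<Longrightarrow> h p \<noteq> h q" using h by (metis bij_betw_def inj_on_def UNIV_I)
    ultimately show ?thesis using V by auto
  qed
  define Q :: "real^'m^'m" where "Q = (\<chi> p. h p)"
  define Dg :: "real^'m^'m" where "Dg = (\<chi> p q. if p = q then lam (h p) else 0)"
  have QQ: "Q ** transpose Q = mat 1"
    using orth by (simp add: vec_eq_iff matrix_matrix_mult_def Q_def transpose_def mat_def inner_vec_def)
  hence QtQ: "transpose Q ** Q = mat 1" using matrix_left_right_inverse by blast
  have QA: "Q ** A = Dg ** Q"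
  proof -
    have "(Q ** A) $ p $ j = (Dg ** Q) $ p $ j" for p j
    proof -
      have "(Q ** A) $ p $ j = (\<Sum>k\<in>UNIV. A $ j $ k * h p $ k)"
        using sym by (simp add: matrix_matrix_mult_def Q_def vec_eq_iff transpose_def mult.commute)
      also have "\<dots> = (A *v h p) $ j" by (simp add: matrix_vector_mult_def)
      also have "\<dots> = lam (h p) * h p $ j" by (simp add: eig)
      also have "\<dots> = (Dg ** Q) $ p $ j"
        by (simp add: matrix_matrix_mult_def Dg_def Q_def if_distrib[where f="\<lambda>x. x * _"] cong: if_cong)
      finally show ?thesis .
    qed
    then show ?thesis by (simp add: vec_eq_iff)
  qed
  have "A = transpose Q ** Dg ** Q"
    by (metis QA QtQ matrix_mul_assoc matrix_mul_lid)
  moreover have "orthogonal_matrix Q" using QtQ by (simp add: orthogonal_matrix)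
  moreover have "diagonal_mat Dg" by (simp add: diagonal_mat_def Dg_def)
  ultimately show ?thesis by blast
qed



definition Mq :: "real^'m^'m \<Rightarrow> ('m \<Rightarrow> real) \<Rightarrow> real^'m^'m" where
  "Mq Q d = transpose Q ** (\<chi> i j. if i = j then d i else 0) ** Q"

definition Rq :: "real^'m^'m \<Rightarrow> real^'m^'m \<Rightarrow> 'm \<Rightarrow> 'm \<Rightarrow> real" where
  "Rq Q P p q = (\<Sum>i\<in>UNIV. Q$p$i * P$q$i)"

lemma Mq_entry: "Mq Q d $ i $ j = (\<Sum>p\<in>UNIV. Q$p$i * d p * Q$p$j)"
  by (simp add: Mq_def matrix_matrix_mult_def transpose_def if_distrib[where f="\<lambda>x. x * _"]
      if_distrib[where f="\<lambda>x. _ * x"] sum_distrib_right cong: if_cong)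

lemma sum4_swap:
  fixes f :: "'a \<Rightarrow> 'b \<Rightarrow> 'c \<Rightarrow> 'd \<Rightarrow> real"
  shows "(\<Sum>i\<in>I. \<Sum>j\<in>J. \<Sum>p\<in>P. \<Sum>q\<in>K. f i j p q) = (\<Sum>p\<in>P. \<Sum>q\<in>K. \<Sum>i\<in>I. \<Sum>j\<in>J. f i j p q)"
proof -
  have "(\<Sum>i\<in>I. \<Sum>j\<in>J. \<Sum>p\<in>P. \<Sum>q\<in>K. f i j p q) = (\<Sum>i\<in>I. \<Sum>p\<in>P. \<Sum>j\<in>J. \<Sum>q\<in>K. f i j p q)"
    by (rule sum.cong[OF refl], rule sum.swap)
  also have "\<dots> = (\<Sum>i\<in>I. \<Sum>p\<in>P. \<Sum>q\<in>K. \<Sum>j\<in>J. f i j p q)"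
    by (rule sum.cong[OF refl], rule sum.cong[OF refl], rule sum.swap)
  also have "\<dots> = (\<Sum>p\<in>P. \<Sum>i\<in>I. \<Sum>q\<in>K. \<Sum>j\<in>J. f i j p q)"
    by (rule sum.swap)
  also have "\<dots> = (\<Sum>p\<in>P. \<Sum>q\<in>K. \<Sum>i\<in>I. \<Sum>j\<in>J. f i j p q)"
    by (rule sum.cong[OF refl], rule sum.swap)
  finally show ?thesis .
qed

lemma Frob_Mq: "(\<Sum>i\<in>UNIV. \<Sum>j\<in>UNIV. Mq Q d $ i $ j * Mq P e $ i $ j)
   = (\<Sum>p\<in>UNIV. \<Sum>q\<in>UNIV. d p * e q * (Rq Q P p q)^2)"
proof -
  have "(\<Sum>i\<in>UNIV. \<Sum>j\<in>UNIV. Mq Q d $ i $ j * Mq P e $ i $ j)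
     = (\<Sum>i\<in>UNIV. \<Sum>j\<in>UNIV. \<Sum>p\<in>UNIV. \<Sum>q\<in>UNIV. d p * e q * ((Q$p$i * P$q$i) * (Q$p$j * P$q$j)))"
    by (simp add: Mq_entry sum_product algebra_simps)
  also have "\<dots> = (\<Sum>p\<in>UNIV. \<Sum>q\<in>UNIV. \<Sum>i\<in>UNIV. \<Sum>j\<in>UNIV. d p * e q * ((Q$p$i * P$q$i) * (Q$p$j * P$q$j)))"
    by (rule sum4_swap)
  also have "\<dots> = (\<Sum>p\<in>UNIV. \<Sum>q\<in>UNIV. d p * e q * (Rq Q P p q)^2)"
  proof (intro sum.cong refl)
    fix p q
    have "(Rq Q P p q)^2 = (\<Sum>i\<in>UNIV. \<Sum>j\<in>UNIV. (Q$p$i * P$q$i) * (Q$p$j * P$q$j))"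
      unfolding Rq_def power2_eq_square sum_product ..
    then show "(\<Sum>i\<in>UNIV. \<Sum>j\<in>UNIV. d p * e q * ((Q$p$i * P$q$i) * (Q$p$j * P$q$j))) = d p * e q * (Rq Q P p q)^2"
      by (simp add: sum_distrib_left)
  qed
  finally show ?thesis .
qed


lemma orth_QQt: "orthogonal_matrix Q \<Longrightarrow> (\<Sum>i\<in>UNIV. Q$p$i * Q$q$i) = (if p = q then 1 else 0)"
proof -
  assume "orthogonal_matrix Q"
  hence "Q ** transpose Q = mat 1" by (simp add: orthogonal_matrix_def)
  hence "(Q ** transpose Q) $ p $ q = mat 1 $ p $ q" by simp
  thus ?thesis by (simp add: matrix_matrix_mult_def transpose_def mat_def)
qed

lemma orth_QtQ: "orthogonal_matrix Q \<Longrightarrow> (\<Sum>q\<in>UNIV. Q$q$i * Q$q$j) = (if i = j then 1 else 0)"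
proof -
  assume "orthogonal_matrix Q"
  hence "transpose Q ** Q = mat 1" by (simp add: orthogonal_matrix_def)
  hence "(transpose Q ** Q) $ i $ j = mat 1 $ i $ j" by simp
  thus ?thesis by (simp add: matrix_matrix_mult_def transpose_def mat_def)
qed

lemma Rq_self: "orthogonal_matrix Q \<Longrightarrow> Rq Q Q p q = (if p = q then 1 else 0)"
  by (simp add: Rq_def orth_QQt)

lemma Rq_comm: "Rq P Q q p = Rq Q P p q"
  by (simp add: Rq_def mult.commute)

lemma sum3_swap:
  fixes f :: "'a \<Rightarrow> 'b \<Rightarrow> 'c \<Rightarrow> real"
  shows "(\<Sum>q\<in>K. \<Sum>i\<in>I. \<Sum>j\<in>J. f q i j) = (\<Sum>i\<in>I. \<Sum>j\<in>J. \<Sum>q\<in>K. f q i j)"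
proof -
  have "(\<Sum>q\<in>K. \<Sum>i\<in>I. \<Sum>j\<in>J. f q i j) = (\<Sum>i\<in>I. \<Sum>q\<in>K. \<Sum>j\<in>J. f q i j)" by (rule sum.swap)
  also have "\<dots> = (\<Sum>i\<in>I. \<Sum>j\<in>J. \<Sum>q\<in>K. f q i j)" by (rule sum.cong[OF refl], rule sum.swap)
  finally show ?thesis .
qed

lemma Rq_row:
  assumes Q: "orthogonal_matrix Q" and P: "orthogonal_matrix P"
  shows "(\<Sum>q\<in>UNIV. (Rq Q P p q)^2) = 1"
proof -
  have "(\<Sum>q\<in>UNIV. (Rq Q P p q)^2) = (\<Sum>q\<in>UNIV. \<Sum>i\<in>UNIV. \<Sum>j\<in>UNIV. (Q$p$i * Q$p$j) * (P$q$i * P$q$j))"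
    unfolding Rq_def power2_eq_square sum_product by (simp add: algebra_simps)
  also have "\<dots> = (\<Sum>i\<in>UNIV. \<Sum>j\<in>UNIV. \<Sum>q\<in>UNIV. (Q$p$i * Q$p$j) * (P$q$i * P$q$j))"
    by (rule sum3_swap)
  also have "\<dots> = (\<Sum>i\<in>UNIV. \<Sum>j\<in>UNIV. (Q$p$i * Q$p$j) * (if i = j then 1 else 0))"
    by (simp add: sum_distrib_left[symmetric] orth_QtQ[OF P])
  also have "\<dots> = (\<Sum>i\<in>UNIV. Q$p$i * Q$p$i)"
    by (simp add: if_distrib[where f="\<lambda>x. _ * x"] cong: if_cong)
  also have "\<dots> = 1" using orth_QQt[OF Q, of p p] by simp
  finally show ?thesis .
qed

lemma Rq_col:
  assumes Q: "orthogonal_matrix Q" and P: "orthogonal_matrix P"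
  shows "(\<Sum>p\<in>UNIV. (Rq Q P p q)^2) = 1"
  using Rq_row[OF P Q, of q] by (simp add: Rq_comm)

lemma Frob_self:
  assumes Q: "orthogonal_matrix Q"
  shows "(\<Sum>p\<in>UNIV. \<Sum>q\<in>UNIV. d p * e q * (Rq Q Q p q)^2) = (\<Sum>p\<in>UNIV. d p * e p)"
  by (simp add: Rq_self[OF Q] if_distrib[where f="\<lambda>x. _ * x"] if_distrib[where f="\<lambda>x. x^2"] cong: if_cong)

lemma Frob_diff:
  fixes Q P :: "real^'m^'m"
  assumes Q: "orthogonal_matrix Q" and P: "orthogonal_matrix P"
  shows "(\<Sum>i\<in>UNIV. \<Sum>j\<in>UNIV. (Mq Q d1 - Mq P d2) $ i $ j * (Mq Q e1 - Mq P e2) $ i $ j)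
       = (\<Sum>p\<in>UNIV. \<Sum>q\<in>UNIV. (Rq Q P p q)^2 * ((d1 p - d2 q) * (e1 p - e2 q)))"
proof -
  let ?F = "\<lambda>Q d P e. (\<Sum>i\<in>UNIV. \<Sum>j\<in>UNIV. Mq Q d $ i $ j * Mq P e $ i $ j)"
  have L: "(\<Sum>i\<in>UNIV. \<Sum>j\<in>UNIV. (Mq Q d1 - Mq P d2) $ i $ j * (Mq Q e1 - Mq P e2) $ i $ j)
     = ?F Q d1 Q e1 - ?F Q d1 P e2 - ?F P d2 Q e1 + ?F P d2 P e2"
    by (simp add: algebra_simps sum.distrib sum_subtractf)
  have 1: "?F Q d1 Q e1 = (\<Sum>p\<in>UNIV. \<Sum>q\<in>UNIV. (Rq Q P p q)^2 * (d1 p * e1 p))"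
  proof -
    have "?F Q d1 Q e1 = (\<Sum>p\<in>UNIV. d1 p * e1 p)" by (simp only: Frob_Mq Frob_self[OF Q])
    also have "\<dots> = (\<Sum>p\<in>UNIV. (d1 p * e1 p) * (\<Sum>q\<in>UNIV. (Rq Q P p q)^2))" by (simp add: Rq_row[OF Q P])
    also have "\<dots> = (\<Sum>p\<in>UNIV. \<Sum>q\<in>UNIV. (Rq Q P p q)^2 * (d1 p * e1 p))"
      by (intro sum.cong refl) (simp add: sum_distrib_left mult.commute)
    finally show ?thesis .
  qed
  have 2: "?F Q d1 P e2 = (\<Sum>p\<in>UNIV. \<Sum>q\<in>UNIV. (Rq Q P p q)^2 * (d1 p * e2 q))"
    unfolding Frob_Mq by (intro sum.cong refl) (simp only: mult.commute)
  have 3: "?F P d2 Q e1 = (\<Sum>p\<in>UNIV. \<Sum>q\<in>UNIV. (Rq Q P p q)^2 * (d2 q * e1 p))"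
  proof -
    have "?F P d2 Q e1 = (\<Sum>q\<in>UNIV. \<Sum>p\<in>UNIV. d2 q * e1 p * (Rq P Q q p)^2)" by (rule Frob_Mq)
    also have "\<dots> = (\<Sum>q\<in>UNIV. \<Sum>p\<in>UNIV. d2 q * e1 p * (Rq Q P p q)^2)" by (simp only: Rq_comm[of P Q])
    also have "\<dots> = (\<Sum>p\<in>UNIV. \<Sum>q\<in>UNIV. d2 q * e1 p * (Rq Q P p q)^2)" by (rule sum.swap)
    also have "\<dots> = (\<Sum>p\<in>UNIV. \<Sum>q\<in>UNIV. (Rq Q P p q)^2 * (d2 q * e1 p))" by (intro sum.cong refl) (simp only: mult.commute)
    finally show ?thesis .
  qed
  have 4: "?F P d2 P e2 = (\<Sum>p\<in>UNIV. \<Sum>q\<in>UNIV. (Rq Q P p q)^2 * (d2 q * e2 q))"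
  proof -
    have "?F P d2 P e2 = (\<Sum>q\<in>UNIV. d2 q * e2 q)" by (simp only: Frob_Mq Frob_self[OF P])
    also have "\<dots> = (\<Sum>q\<in>UNIV. (d2 q * e2 q) * (\<Sum>p\<in>UNIV. (Rq Q P p q)^2))" by (simp add: Rq_col[OF Q P])
    also have "\<dots> = (\<Sum>q\<in>UNIV. \<Sum>p\<in>UNIV. (Rq Q P p q)^2 * (d2 q * e2 q))" by (intro sum.cong refl) (simp add: sum_distrib_left mult.commute)
    also have "\<dots> = (\<Sum>p\<in>UNIV. \<Sum>q\<in>UNIV. (Rq Q P p q)^2 * (d2 q * e2 q))" by (rule sum.swap)
    finally show ?thesis .
  qed
  have e: "(Rq Q P p q)^2 * ((d1 p - d2 q) * (e1 p - e2 q)) = (Rq Q P p q)^2 * (d1 p * e1 p) - (Rq Q P p q)^2 * (d1 p * e2 q) - (Rq Q P p q)^2 * (d2 q * e1 p) + (Rq Q P p q)^2 * (d2 q * e2 q)" for p q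
    by (simp add: algebra_simps)
  show ?thesis unfolding L 1 2 3 4 e
    by (simp only: sum.distrib sum_subtractf)
qed


lemma scalar_ineq:
  fixes g :: "real \<Rightarrow> real"
  assumes mono: "mono g" and lip: "L-lipschitz_on UNIV g"
  shows "(g a - g b)^2 \<le> L * ((g a - g b) * (a - b))"
proof -
  have L: "\<bar>g a - g b\<bar> \<le> L * \<bar>a - b\<bar>" using lip by (simp add: lipschitz_on_def dist_real_def)
  show ?thesis
  proof (cases "b \<le> a")
    case True
    hence "g b \<le> g a" using mono by (simp add: mono_def)
    hence "(g a - g b) * (g a - g b) \<le> (g a - g b) * (L * (a - b))" using L True
      by (intro mult_left_mono) auto
    thus ?thesis by (simp add: power2_eq_square algebra_simps)
  next
    case False
    hence "g a \<le> g b" using mono by (simp add: mono_def)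
    hence "(g b - g a) * (g b - g a) \<le> (g b - g a) * (L * (b - a))" using L False
      by (intro mult_left_mono) auto
    thus ?thesis by (simp add: power2_eq_square algebra_simps)
  qed
qed

lemma mat_fun_rep:
  fixes A :: "real^'m^'m"
  assumes sym: "transpose A = A"
  shows "\<exists>Q d. orthogonal_matrix Q \<and> A = Mq Q d \<and> mat_fun g A = Mq Q (\<lambda>i. g (d i))"
proof -
  obtain Q Dg where QD: "orthogonal_matrix Q" "diagonal_mat Dg" "A = transpose Q ** Dg ** Q"
    using spectral[OF sym] by blast
  have ex: "\<exists>B. \<exists>Q Dg. orthogonal_matrix Q \<and> diagonal_mat Dg \<and> A = transpose Q ** Dg ** Q
       \<and> B = transpose Q ** (\<chi> i j. if i = j then g (Dg $ i $ i) else 0) ** Q"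
    by (rule exI[of _ "transpose Q ** (\<chi> i j. if i = j then g (Dg $ i $ i) else 0) ** Q"], rule exI[of _ Q], rule exI[of _ Dg]) (intro conjI QD refl)
  have "\<exists>Q Dg. orthogonal_matrix Q \<and> diagonal_mat Dg \<and> A = transpose Q ** Dg ** Q
       \<and> mat_fun g A = transpose Q ** (\<chi> i j. if i = j then g (Dg $ i $ i) else 0) ** Q"
    unfolding mat_fun_def by (rule someI_ex[OF ex])
  then obtain Q' Dg' where Q': "orthogonal_matrix Q'" "diagonal_mat Dg'" "A = transpose Q' ** Dg' ** Q'"
     "mat_fun g A = transpose Q' ** (\<chi> i j. if i = j then g (Dg' $ i $ i) else 0) ** Q'"
    by (elim exE conjE)
  have "Dg' = (\<chi> i j. if i = j then Dg' $ i $ i else 0)"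
    using Q'(2) by (simp add: vec_eq_iff diagonal_mat_def)
  hence "A = Mq Q' (\<lambda>i. Dg' $ i $ i)" using Q'(3) by (simp add: Mq_def)
  moreover have "mat_fun g A = Mq Q' (\<lambda>i. g (Dg' $ i $ i))" using Q'(4) by (simp add: Mq_def)
  ultimately show ?thesis using Q'(1) by blast
qed

lemma mat_ineq:
  fixes A B :: "real^'m^'m" and g :: "real \<Rightarrow> real"
  assumes symA: "transpose A = A" and symB: "transpose B = B"
    and mono: "mono g" and lip: "L-lipschitz_on UNIV g"
  shows "(\<Sum>i\<in>UNIV. \<Sum>j\<in>UNIV. ((mat_fun g A - mat_fun g B) $ i $ j)^2)
      \<le> L * (\<Sum>i\<in>UNIV. \<Sum>j\<in>UNIV. (mat_fun g A - mat_fun g B) $ i $ j * (A - B) $ i $ j)"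
proof -
  obtain Q d where Q: "orthogonal_matrix Q" "A = Mq Q d" "mat_fun g A = Mq Q (\<lambda>i. g (d i))"
    using mat_fun_rep[OF symA] by blast
  obtain P e where P: "orthogonal_matrix P" "B = Mq P e" "mat_fun g B = Mq P (\<lambda>i. g (e i))"
    using mat_fun_rep[OF symB] by blast
  have "(\<Sum>i\<in>UNIV. \<Sum>j\<in>UNIV. ((mat_fun g A - mat_fun g B) $ i $ j)^2)
     = (\<Sum>p\<in>UNIV. \<Sum>q\<in>UNIV. (Rq Q P p q)^2 * ((g (d p) - g (e q)) * (g (d p) - g (e q))))"
    unfolding Q(3) P(3) power2_eq_square[of "(_ - _) $ _ $ _"] by (rule Frob_diff[OF Q(1) P(1)])
  also have "\<dots> \<le> (\<Sum>p\<in>UNIV. \<Sum>q\<in>UNIV. L * ((Rq Q P p q)^2 * ((g (d p) - g (e q)) * (d p - e q))))"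
  proof (intro sum_mono)
    fix p q
    have "(g (d p) - g (e q))^2 \<le> L * ((g (d p) - g (e q)) * (d p - e q))"
      by (rule scalar_ineq[OF mono lip])
    hence "(Rq Q P p q)^2 * (g (d p) - g (e q))^2 \<le> (Rq Q P p q)^2 * (L * ((g (d p) - g (e q)) * (d p - e q)))"
      by (intro mult_left_mono) auto
    thus "(Rq Q P p q)^2 * ((g (d p) - g (e q)) * (g (d p) - g (e q))) \<le> L * ((Rq Q P p q)^2 * ((g (d p) - g (e q)) * (d p - e q)))"
      by (simp add: power2_eq_square algebra_simps)
  qed
  also have "\<dots> = L * (\<Sum>p\<in>UNIV. \<Sum>q\<in>UNIV. (Rq Q P p q)^2 * ((g (d p) - g (e q)) * (d p - e q)))"
    by (simp add: sum_distrib_left)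
  also have "\<dots> = L * (\<Sum>i\<in>UNIV. \<Sum>j\<in>UNIV. (mat_fun g A - mat_fun g B) $ i $ j * (A - B) $ i $ j)"
    unfolding Q(3) P(3) unfolding Q(2) P(2) Frob_diff[OF Q(1) P(1)] ..
  finally show ?thesis .
qed



lemma simplex_basis:
  fixes S :: "(real^'n) set"
  assumes S: "is_simplex_vertices S" and a0: "a0 \<in> S"
  shows "independent ((\<lambda>x. x - a0) ` (S - {a0}))" "span ((\<lambda>x. x - a0) ` (S - {a0})) = UNIV"
    "card ((\<lambda>x. x - a0) ` (S - {a0})) = CARD('n)"
proof -
  have fin: "finite S" and cS: "card S = CARD('n) + 1" and ai: "\<not> affine_dependent S"
    using S by (auto simp: is_simplex_vertices_def)
  have eq: "(\<lambda>x. x - a0) ` (S - {a0}) = (\<lambda>x. -a0 + x) ` (S - {a0})" by (auto simp: algebra_simps)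
  have dep: "\<not> dependent ((\<lambda>x. -a0 + x) ` (S - {a0}))"
    using ai affine_dependent_iff_dependent2[OF a0] by blast
  show ind: "independent ((\<lambda>x. x - a0) ` (S - {a0}))"
    unfolding eq using dep .
  have "inj_on (\<lambda>x. x - a0) (S - {a0})" by (auto simp: inj_on_def)
  hence "card ((\<lambda>x. x - a0) ` (S - {a0})) = card (S - {a0})" by (rule card_image)
  also have "\<dots> = CARD('n)" using fin cS a0 by simp
  finally show cB: "card ((\<lambda>x. x - a0) ` (S - {a0})) = CARD('n)" .
  have "UNIV \<subseteq> span ((\<lambda>x. x - a0) ` (S - {a0}))"
    by (rule card_ge_dim_independent) (use ind cB in auto)
  thus "span ((\<lambda>x. x - a0) ` (S - {a0})) = UNIV" by auto
qed

lemma simplex_nonempty: "is_simplex_vertices S \<Longrightarrow> S \<noteq> {}"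
  by (auto simp: is_simplex_vertices_def)

lemma affine_exists:
  fixes S :: "(real^'n) set" and u :: "real^'n \<Rightarrow> real"
  assumes S: "is_simplex_vertices S"
  shows "\<exists>a c. \<forall>w\<in>S. a \<bullet> w + c = u w"
proof -
  obtain a0 where a0: "a0 \<in> S" using simplex_nonempty[OF S] by blast
  obtain l where l: "linear l" "\<forall>x\<in>(\<lambda>x. x - a0) ` (S - {a0}). l x = u (x + a0) - u a0"
    using real_vector.linear_independent_extend[OF simplex_basis(1)[OF S a0], of "\<lambda>x. u (x + a0) - u a0"] by (elim exE conjE) (rule that)
  define a where "a = adjoint l 1"
  have la: "a \<bullet> x = l x" for x
    using adjoint_works[OF l(1), of x 1] by (simp add: a_def inner_commute[of _ x])
  have "\<forall>w\<in>S. a \<bullet> w + (u a0 - a \<bullet> a0) = u w"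
  proof
    fix w assume w: "w \<in> S"
    show "a \<bullet> w + (u a0 - a \<bullet> a0) = u w"
    proof (cases "w = a0")
      case True then show ?thesis by simp
    next
      case False
      hence "w - a0 \<in> (\<lambda>x. x - a0) ` (S - {a0})" using w by auto
      hence "l (w - a0) = u w - u a0" using bspec[OF l(2)] by simp
      moreover have "a \<bullet> w - a \<bullet> a0 = l (w - a0)" using la[of "w - a0"] by (simp add: inner_diff_right)
      ultimately show ?thesis by simp
    qed
  qed
  thus ?thesis by blast
qed

lemma affine_unique:
  fixes S :: "(real^'n) set"
  assumes S: "is_simplex_vertices S" and eq: "\<forall>w\<in>S. a \<bullet> w + c = a' \<bullet> w + c'"
  shows "a = a' \<and> c = c'"
proof -
  obtain a0 where a0: "a0 \<in> S" using simplex_nonempty[OF S] by blast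
  let ?d = "a - a'"
  have h: "?d \<bullet> w = c' - c" if "w \<in> S" for w
    using bspec[OF eq that] by (simp add: inner_diff_left)
  have "\<forall>y\<in>(\<lambda>x. x - a0) ` (S - {a0}). orthogonal ?d y"
  proof
    fix y assume "y \<in> (\<lambda>x. x - a0) ` (S - {a0})"
    then obtain w where w: "w \<in> S" "y = w - a0" by auto
    show "orthogonal ?d y" unfolding orthogonal_def w(2) inner_diff_right using h[OF w(1)] h[OF a0] by simp
  qed
  hence "orthogonal ?d ?d"
    using simplex_basis(2)[OF S a0] by (intro orthogonal_to_span[of ?d "(\<lambda>x. x - a0) ` (S - {a0})" ?d]) auto
  hence "a = a'" by (simp add: orthogonal_self)
  moreover then have "c = c'" using eq a0 by auto
  ultimately show ?thesis by simp
qed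

lemma affine_hull_agree:
  fixes X :: "(real^'n) set"
  assumes "x \<in> convex hull X" "\<forall>w\<in>X. a1 \<bullet> w + c1 = a2 \<bullet> w + c2"
  shows "a1 \<bullet> x + c1 = a2 \<bullet> x + c2"
proof -
  have "X \<subseteq> {y. (a1 - a2) \<bullet> y = c2 - c1}" using assms(2) by (auto simp: inner_diff_left algebra_simps)
  hence "convex hull X \<subseteq> {y. (a1 - a2) \<bullet> y = c2 - c1}"
    by (rule hull_minimal) (rule convex_hyperplane)
  thus ?thesis using assms(1) by (auto simp: inner_diff_left algebra_simps)
qed

lemma grad_on_eq:
  fixes S :: "(real^'n) set"
  assumes S: "is_simplex_vertices S" and f: "\<forall>x\<in>convex hull S. f x = a \<bullet> x + c"
  shows "grad_on S f = a"
  unfolding grad_on_def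
proof (rule the_equality)
  show "\<exists>c. \<forall>x\<in>convex hull S. f x = a \<bullet> x + c" using f by blast
next
  fix a' assume "\<exists>c. \<forall>x\<in>convex hull S. f x = a' \<bullet> x + c"
  then obtain c' where c': "\<forall>x\<in>convex hull S. f x = a' \<bullet> x + c'" by blast
  have "\<forall>w\<in>S. a' \<bullet> w + c' = a \<bullet> w + c" using f c' hull_subset[of S convex] by auto
  thus "a' = a" using affine_unique[OF S] by blast
qed



definition apair :: "(real^'n) set \<Rightarrow> (real^'n \<Rightarrow> real) \<Rightarrow> (real^'n) \<times> real" where
  "apair S u = (SOME p. \<forall>w\<in>S. fst p \<bullet> w + snd p = u w)"

definition agrad where "agrad S u = fst (apair S u)"
definition aconst where "aconst S u = snd (apair S u)"

lemma apair_spec: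
  assumes S: "is_simplex_vertices S"
  shows "\<forall>w\<in>S. agrad S u \<bullet> w + aconst S u = u w"
proof -
  obtain a c where "\<forall>w\<in>S. a \<bullet> w + c = u w" using affine_exists[OF S] by blast
  hence "\<exists>p. \<forall>w\<in>S. fst p \<bullet> w + snd p = u w" by (intro exI[of _ "(a,c)"]) simp
  thus ?thesis unfolding agrad_def aconst_def apair_def by (rule someI_ex)
qed

lemma agrad_unique:
  assumes S: "is_simplex_vertices S" and "\<forall>w\<in>S. a \<bullet> w + c = u w"
  shows "agrad S u = a"
  using affine_unique[OF S, of "agrad S u" "aconst S u" a c] apair_spec[OF S, of u] assms(2) by auto

lemma mesh_simplex: "conforming_mesh T D \<Longrightarrow> S \<in> T \<Longrightarrow> is_simplex_vertices S"
  by (auto simp: conforming_mesh_def)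

lemma mesh_agree:
  assumes M: "conforming_mesh T D" and Sa: "Sa \<in> T" and Sb: "Sb \<in> T"
    and x: "x \<in> convex hull Sa" "x \<in> convex hull Sb"
  shows "agrad Sa u \<bullet> x + aconst Sa u = agrad Sb u \<bullet> x + aconst Sb u"
proof -
  have "x \<in> convex hull (Sa \<inter> Sb)" using M Sa Sb x by (auto simp: conforming_mesh_def)
  moreover have "\<forall>w\<in>Sa \<inter> Sb. agrad Sa u \<bullet> w + aconst Sa u = agrad Sb u \<bullet> w + aconst Sb u"
    using apair_spec[OF mesh_simplex[OF M Sa], of u] apair_spec[OF mesh_simplex[OF M Sb], of u] by auto
  ultimately show ?thesis by (rule affine_hull_agree)
qed

lemma nodal_interp_on:
  assumes M: "conforming_mesh T D" and S: "S \<in> T" and x: "x \<in> convex hull S"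
  shows "nodal_interp T D u x = agrad S u \<bullet> x + aconst S u"
proof -
  have Deq: "D = (\<Union>S\<in>T. convex hull S)" using M unfolding conforming_mesh_def by blast
  have finT: "finite T" using M unfolding conforming_mesh_def by blast
  define W where "W x = (if x \<in> D then agrad (SOME S'. S' \<in> T \<and> x \<in> convex hull S') u \<bullet> x
        + aconst (SOME S'. S' \<in> T \<and> x \<in> convex hull S') u else 0)" for x
  have W_on: "W x = agrad S u \<bullet> x + aconst S u" if S: "S \<in> T" and x: "x \<in> convex hull S" for S x
  proof -
    have xD: "x \<in> D" using Deq S x by blast
    have "\<exists>S'. S' \<in> T \<and> x \<in> convex hull S'" using S x by blast
    hence S': "(SOME S'. S' \<in> T \<and> x \<in> convex hull S') \<in> T \<and> x \<in> convex hull (SOME S'. S' \<in> T \<and> x \<in> convex hull S')"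
      by (rule someI_ex)
    have "W x = agrad (SOME S'. S' \<in> T \<and> x \<in> convex hull S') u \<bullet> x
        + aconst (SOME S'. S' \<in> T \<and> x \<in> convex hull S') u" using xD unfolding W_def by (rule if_P)
    also have "\<dots> = agrad S u \<bullet> x + aconst S u"
      by (rule mesh_agree[OF M conjunct1[OF S'] S conjunct2[OF S'] x])
    finally show ?thesis .
  qed
  have contS: "continuous_on (convex hull S) W" if S: "S \<in> T" for S
  proof (rule continuous_on_eq)
    show "continuous_on (convex hull S) (\<lambda>x. agrad S u \<bullet> x + aconst S u)" by (intro continuous_intros)
    fix x assume "x \<in> convex hull S"
    then show "agrad S u \<bullet> x + aconst S u = W x" using W_on[OF S] by simp
  qed
  have closedS: "closed (convex hull S)" if S: "S \<in> T" for S
  proof -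
    have "finite S" using mesh_simplex[OF M S] unfolding is_simplex_vertices_def by blast
    thus ?thesis by (intro compact_imp_closed compact_convex_hull finite_imp_compact)
  qed
  have "continuous_on (\<Union>S\<in>T. convex hull S) W"
    by (rule continuous_on_closed_Union[OF finT closedS contS])
  hence contD: "continuous_on D W" using Deq by simp
  have affW: "\<forall>S\<in>T. \<exists>a c. \<forall>x\<in>convex hull S. W x = a \<bullet> x + c"
  proof
    fix S assume S: "S \<in> T"
    have "\<forall>x\<in>convex hull S. W x = agrad S u \<bullet> x + aconst S u" using W_on[OF S] by blast
    thus "\<exists>a c. \<forall>x\<in>convex hull S. W x = a \<bullet> x + c" by blast
  qed
  have WQ: "W \<in> Q1 T D" unfolding Q1_def using contD affW by blast
  have Wv: "\<forall>v\<in>mesh_vertices T. W v = u v"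
  proof
    fix v assume "v \<in> mesh_vertices T"
    then obtain S where S: "S \<in> T" "v \<in> S" unfolding mesh_vertices_def by blast
    have "v \<in> convex hull S" using S(2) by (rule hull_inc)
    hence "W v = agrad S u \<bullet> v + aconst S u" using W_on[OF S(1)] by blast
    also have "\<dots> = u v" using apair_spec[OF mesh_simplex[OF M S(1)], of u] S(2) by blast
    finally show "W v = u v" .
  qed
  have W0: "\<forall>x. x \<notin> D \<longrightarrow> W x = 0" unfolding W_def by simp
  have uniq: "w = W" if w: "w \<in> Q1 T D \<and> (\<forall>v\<in>mesh_vertices T. w v = u v) \<and> (\<forall>x. x \<notin> D \<longrightarrow> w x = 0)" for w
  proof
    fix y show "w y = W y"
    proof (cases "y \<in> D")
      case False then show ?thesis using w W0 by simp
    next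
      case True
      then obtain S where S: "S \<in> T" "y \<in> convex hull S" using Deq by blast
      have "\<exists>a c. \<forall>x\<in>convex hull S. w x = a \<bullet> x + c" using w S(1) unfolding Q1_def by blast
      then obtain a c where ac: "\<forall>x\<in>convex hull S. w x = a \<bullet> x + c" by blast
      have "\<forall>s\<in>S. a \<bullet> s + c = agrad S u \<bullet> s + aconst S u"
      proof
        fix s assume s: "s \<in> S"
        have "s \<in> mesh_vertices T" using s S(1) unfolding mesh_vertices_def by blast
        hence "w s = u s" using w by blast
        moreover have "w s = a \<bullet> s + c" using ac hull_inc[OF s] by blast
        moreover have "agrad S u \<bullet> s + aconst S u = u s"
          using apair_spec[OF mesh_simplex[OF M S(1)], of u] s by blast
        ultimately show "a \<bullet> s + c = agrad S u \<bullet> s + aconst S u" by simp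
      qed
      hence "a \<bullet> y + c = agrad S u \<bullet> y + aconst S u" by (rule affine_hull_agree[OF S(2)])
      moreover have "w y = a \<bullet> y + c" using ac S(2) by blast
      moreover have "W y = agrad S u \<bullet> y + aconst S u" using W_on[OF S(1) S(2)] .
      ultimately show ?thesis by simp
    qed
  qed
  have "nodal_interp T D u = W" unfolding nodal_interp_def
  proof (rule the_equality)
    show "W \<in> Q1 T D \<and> (\<forall>v\<in>mesh_vertices T. W v = u v) \<and> (\<forall>x. x \<notin> D \<longrightarrow> W x = 0)"
      using WQ Wv W0 by blast
  next
    fix w assume "w \<in> Q1 T D \<and> (\<forall>v\<in>mesh_vertices T. w v = u v) \<and> (\<forall>x. x \<notin> D \<longrightarrow> w x = 0)"
    thus "w = W" by (rule uniq)
  qed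
  thus ?thesis using W_on[OF S x] by simp
qed

lemma grad_interp:
  assumes M: "conforming_mesh T D" and S: "S \<in> T"
  shows "grad_on S (nodal_interp T D u) = agrad S u"
  using grad_on_eq[OF mesh_simplex[OF M S]] nodal_interp_on[OF M S] by blast

lemma grad_Q1:
  assumes M: "conforming_mesh T D" and S: "S \<in> T" and q: "q \<in> Q1 T D"
  shows "grad_on S q = agrad S q"
proof -
  have "\<exists>a c. \<forall>x\<in>convex hull S. q x = a \<bullet> x + c" using q S unfolding Q1_def by blast
  then obtain a c where ac: "\<forall>x\<in>convex hull S. q x = a \<bullet> x + c" by blast
  hence "grad_on S q = a" using grad_on_eq[OF mesh_simplex[OF M S]] by blast
  moreover have "\<forall>w\<in>S. a \<bullet> w + c = q w" using ac hull_inc[of _ S convex] by simp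
  hence "agrad S q = a" by (rule agrad_unique[OF mesh_simplex[OF M S]])
  ultimately show ?thesis by simp
qed



definition bary where "bary S k = agrad S (\<lambda>w. if w = k then 1 else 0)"

lemma agrad_lin:
  assumes S: "is_simplex_vertices S"
  shows "agrad S u = (\<Sum>k\<in>S. u k *\<^sub>R bary S k)"
proof (rule agrad_unique[OF S])
  have fin: "finite S" using S by (simp add: is_simplex_vertices_def)
  let ?c = "\<lambda>k. aconst S (\<lambda>w. if w = k then 1 else 0)"
  show "\<forall>w\<in>S. (\<Sum>k\<in>S. u k *\<^sub>R bary S k) \<bullet> w + (\<Sum>k\<in>S. u k * ?c k) = u w"
  proof
    fix w assume w: "w \<in> S"
    have "(\<Sum>k\<in>S. u k *\<^sub>R bary S k) \<bullet> w + (\<Sum>k\<in>S. u k * ?c k) = (\<Sum>k\<in>S. u k * (bary S k \<bullet> w + ?c k))"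
      by (simp add: inner_sum_left sum.distrib algebra_simps)
    also have "\<dots> = (\<Sum>k\<in>S. u k * (if w = k then 1 else 0))"
      using apair_spec[OF S] w unfolding bary_def by (intro sum.cong refl) auto
    also have "\<dots> = u w" using fin w by (simp add: if_distrib[where f="\<lambda>x. _ * x"] cong: if_cong)
    finally show "(\<Sum>k\<in>S. u k *\<^sub>R bary S k) \<bullet> w + (\<Sum>k\<in>S. u k * ?c k) = u w" .
  qed
qed

lemma bary_sum:
  assumes S: "is_simplex_vertices S"
  shows "(\<Sum>k\<in>S. bary S k) = 0"
proof -
  have "agrad S (\<lambda>_. 1) = 0" by (rule agrad_unique[OF S, of 0 1]) simp
  thus ?thesis using agrad_lin[OF S, of "\<lambda>_. 1"] by simp
qed

lemma bary_val:
  assumes S: "is_simplex_vertices S" and w: "w \<in> S"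
  shows "bary S k \<bullet> w + aconst S (\<lambda>w. if w = k then 1 else 0) = (if w = k then 1 else 0)"
  using apair_spec[OF S] w unfolding bary_def by auto

lemma dot_formula:
  assumes S: "is_simplex_vertices S"
  shows "agrad S u \<bullet> agrad S p
     = - (1/2) * (\<Sum>k\<in>S. \<Sum>l\<in>S. (bary S k \<bullet> bary S l) * ((u k - u l) * (p k - p l)))"
proof -
  let ?B = "\<lambda>k l. bary S k \<bullet> bary S l"
  have rows: "(\<Sum>l\<in>S. ?B k l) = 0" for k
    using bary_sum[OF S] by (simp add: inner_sum_right[symmetric])
  have cols: "(\<Sum>k\<in>S. ?B k l) = 0" for l
    using bary_sum[OF S] by (simp add: inner_sum_left[symmetric])
  have "agrad S u \<bullet> agrad S p = (\<Sum>l\<in>S. \<Sum>k\<in>S. p l * (u k * ?B k l))"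
    unfolding agrad_lin[OF S, of u] agrad_lin[OF S, of p]
    by (simp only: inner_sum_left inner_sum_right inner_scaleR_left inner_scaleR_right sum_distrib_left)
  also have "\<dots> = (\<Sum>k\<in>S. \<Sum>l\<in>S. p l * (u k * ?B k l))" by (rule sum.swap)
  also have "\<dots> = (\<Sum>k\<in>S. \<Sum>l\<in>S. ?B k l * (u k * p l))"
    by (intro sum.cong refl) (simp only: mult.commute mult.left_commute)
  finally have X: "agrad S u \<bullet> agrad S p = (\<Sum>k\<in>S. \<Sum>l\<in>S. ?B k l * (u k * p l))" .
  have e: "?B k l * ((u k - u l) * (p k - p l)) = ?B k l * (u k * p k) - ?B k l * (u k * p l) - ?B k l * (u l * p k) + ?B k l * (u l * p l)" for k l
    by (simp add: algebra_simps)
  have 1: "(\<Sum>k\<in>S. \<Sum>l\<in>S. ?B k l * (u k * p k)) = 0"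
    using rows by (simp add: sum_distrib_right[symmetric])
  have 4: "(\<Sum>k\<in>S. \<Sum>l\<in>S. ?B k l * (u l * p l)) = 0"
  proof -
    have "(\<Sum>k\<in>S. \<Sum>l\<in>S. ?B k l * (u l * p l)) = (\<Sum>l\<in>S. \<Sum>k\<in>S. ?B k l * (u l * p l))" by (rule sum.swap)
    also have "\<dots> = 0" using cols by (simp add: sum_distrib_right[symmetric])
    finally show ?thesis .
  qed
  have 3: "(\<Sum>k\<in>S. \<Sum>l\<in>S. ?B k l * (u l * p k)) = (\<Sum>k\<in>S. \<Sum>l\<in>S. ?B k l * (u k * p l))"
  proof -
    have "(\<Sum>k\<in>S. \<Sum>l\<in>S. ?B k l * (u l * p k)) = (\<Sum>l\<in>S. \<Sum>k\<in>S. ?B k l * (u l * p k))" by (rule sum.swap)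
    also have "\<dots> = (\<Sum>l\<in>S. \<Sum>k\<in>S. ?B l k * (u l * p k))" by (simp add: inner_commute)
    finally show ?thesis .
  qed
  show ?thesis unfolding X e
    by (simp only: sum.distrib sum_subtractf 1 3 4) simp
qed


lemma facet_normal_bary:
  fixes S :: "(real^'n) set"
  assumes S: "is_simplex_vertices S" and v: "v \<in> S"
  shows "\<exists>t<0. facet_normal S v = t *\<^sub>R bary S v \<and> norm (facet_normal S v) = 1"
proof -
  have fin: "finite S" and cS: "card S = CARD('n) + 1" using S by (auto simp: is_simplex_vertices_def)
  have "card (S - {v}) \<ge> 1" using fin cS v by simp
  then obtain a0 where a0: "a0 \<in> S" "a0 \<noteq> v" by (metis DiffE card_0_eq fin finite_Diff not_one_le_zero insertCI ex_in_conv)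
  let ?b = "bary S v" and ?c = "aconst S (\<lambda>w. if w = v then 1 else 0)"
  have bv: "?b \<bullet> v + ?c = 1" using bary_val[OF S v] by simp
  have ba: "a \<in> S \<Longrightarrow> a \<noteq> v \<Longrightarrow> ?b \<bullet> a + ?c = 0" for a using bary_val[OF S, of a v] by simp
  have bva: "a \<in> S \<Longrightarrow> a \<noteq> v \<Longrightarrow> ?b \<bullet> (v - a) = 1" for a using bv ba[of a] by (simp add: inner_diff_right)
  have baa: "a \<in> S \<Longrightarrow> a \<noteq> v \<Longrightarrow> a' \<in> S \<Longrightarrow> a' \<noteq> v \<Longrightarrow> ?b \<bullet> (a - a') = 0" for a a'
    using ba[of a] ba[of a'] by (simp add: inner_diff_right)
  have b0: "?b \<noteq> 0" using bva[OF a0] by auto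
  define n0 where "n0 = (- 1 / norm ?b) *\<^sub>R ?b"
  have "norm n0 = 1 \<and> (\<forall>a\<in>S - {v}. \<forall>b\<in>S - {v}. n0 \<bullet> (a - b) = 0) \<and> (\<forall>a\<in>S - {v}. n0 \<bullet> (v - a) < 0)"
    using b0 baa bva by (auto simp: n0_def)
  hence N: "norm (facet_normal S v) = 1 \<and> (\<forall>a\<in>S - {v}. \<forall>b\<in>S - {v}. facet_normal S v \<bullet> (a - b) = 0)
      \<and> (\<forall>a\<in>S - {v}. facet_normal S v \<bullet> (v - a) < 0)"
    unfolding facet_normal_def by (rule someI)
  let ?N = "facet_normal S v"
  define t where "t = ?N \<bullet> (v - a0)"
  have t0: "t < 0" using N a0 by (auto simp: t_def)
  let ?d = "?N - t *\<^sub>R ?b"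
  have "\<forall>y\<in>(\<lambda>x. x - a0) ` (S - {a0}). orthogonal ?d y"
  proof
    fix y assume "y \<in> (\<lambda>x. x - a0) ` (S - {a0})"
    then obtain w where w: "w \<in> S" "w \<noteq> a0" "y = w - a0" by auto
    show "orthogonal ?d y"
    proof (cases "w = v")
      case True then show ?thesis using w bva[OF a0] by (simp add: orthogonal_def inner_diff_left t_def)
    next
      case False then show ?thesis using w N a0 baa[of w a0] by (simp add: orthogonal_def inner_diff_left)
    qed
  qed
  hence "orthogonal ?d ?d"
    using simplex_basis(2)[OF S a0(1)] by (intro orthogonal_to_span[of ?d "(\<lambda>x. x - a0) ` (S - {a0})" ?d]) auto
  hence "?N = t *\<^sub>R ?b" by (simp add: orthogonal_self)
  thus ?thesis using t0 N by blast
qed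

lemma bary_nonpos:
  fixes S :: "(real^'n) set"
  assumes S: "is_simplex_vertices S" and v: "v \<in> S" and w: "w \<in> S"
    and ang: "dihedral_angle S v w \<le> pi / 2"
  shows "bary S v \<bullet> bary S w \<le> 0"
proof -
  obtain tv where tv: "tv < 0" "facet_normal S v = tv *\<^sub>R bary S v" "norm (facet_normal S v) = 1" using facet_normal_bary[OF S v] by blast
  obtain tw where tw: "tw < 0" "facet_normal S w = tw *\<^sub>R bary S w" "norm (facet_normal S w) = 1" using facet_normal_bary[OF S w] by blast
  let ?c = "facet_normal S v \<bullet> facet_normal S w"
  have "?c \<le> 0"
  proof (rule ccontr)
    assume c0: "\<not> ?c \<le> 0"
    have "\<bar>?c\<bar> \<le> norm (facet_normal S v) * norm (facet_normal S w)" by (rule Cauchy_Schwarz_ineq2)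
    also have "\<dots> = 1" using tv(3) tw(3) by simp
    finally have "?c \<le> 1" by simp
    hence "arccos ?c < arccos 0" using c0 by (intro arccos_less_arccos) auto
    hence "dihedral_angle S v w > pi / 2" by (simp add: dihedral_angle_def)
    thus False using ang by simp
  qed
  hence "(tv * tw) * (bary S v \<bullet> bary S w) \<le> 0" using tv(2) tw(2) by (simp add: algebra_simps)
  moreover have "tv * tw > 0" using tv tw by (simp add: mult_neg_neg)
  ultimately show ?thesis using mult_le_cancel_left_pos[of "tv * tw" "bary S v \<bullet> bary S w" 0] by simp
qed



lemma sum_ineq:
  fixes B Y Z :: "'a \<Rightarrow> 'a \<Rightarrow> real"
  assumes "\<And>k l. k \<in> S \<Longrightarrow> l \<in> S \<Longrightarrow> k \<noteq> l \<Longrightarrow> B k l \<le> 0"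
    and "\<And>k l. k \<in> S \<Longrightarrow> l \<in> S \<Longrightarrow> k \<noteq> l \<Longrightarrow> Y k l \<le> L * Z k l"
    and "\<And>k. Y k k = 0" "\<And>k. Z k k = 0"
  shows "- (1/2) * (\<Sum>k\<in>S. \<Sum>l\<in>S. B k l * Y k l) \<le> L * (- (1/2) * (\<Sum>k\<in>S. \<Sum>l\<in>S. B k l * Z k l))"
proof -
  have "(\<Sum>k\<in>S. \<Sum>l\<in>S. B k l * (L * Z k l - Y k l)) \<le> 0"
  proof (intro sum_nonpos)
    fix k l assume k: "k \<in> S" and l: "l \<in> S"
    show "B k l * (L * Z k l - Y k l) \<le> 0"
    proof (cases "k = l")
      case True then show ?thesis using assms by simp
    next
      case False then show ?thesis using assms(1,2)[OF k l] by (simp add: mult_nonpos_nonneg)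
    qed
  qed
  moreover have "(\<Sum>k\<in>S. \<Sum>l\<in>S. B k l * (L * Z k l - Y k l))
      = L * (\<Sum>k\<in>S. \<Sum>l\<in>S. B k l * Z k l) - (\<Sum>k\<in>S. \<Sum>l\<in>S. B k l * Y k l)"
  proof -
    have "(\<Sum>k\<in>S. \<Sum>l\<in>S. B k l * (L * Z k l - Y k l)) = (\<Sum>k\<in>S. \<Sum>l\<in>S. L * (B k l * Z k l) - B k l * Y k l)"
      by (intro sum.cong refl) (simp add: algebra_simps)
    also have "\<dots> = L * (\<Sum>k\<in>S. \<Sum>l\<in>S. B k l * Z k l) - (\<Sum>k\<in>S. \<Sum>l\<in>S. B k l * Y k l)"
      by (simp only: sum_subtractf sum_distrib_left)
    finally show ?thesis .
  qed
  ultimately show ?thesis by linarith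
qed

theorem lemma5p1:
  fixes T :: "(real^'n) set set" and D :: "(real^'n) set"
    and g :: "real \<Rightarrow> real" and L :: real
  assumes "CARD('n) = 2 \<or> CARD('n) = 3"
    and "conforming_mesh T D"
    and "non_obtuse_mesh T"
    and "mono g"
    and "L-lipschitz_on UNIV g"
  shows "(\<forall>q\<in>Q1 T D. \<forall>S\<in>T.
            L * (grad_on S (nodal_interp T D (g \<circ> q)) \<bullet> grad_on S q)
              \<ge> (norm (grad_on S (nodal_interp T D (g \<circ> q))))\<^sup>2)
       \<and> (\<forall>\<phi>\<in>(S1 T D :: (real^'n \<Rightarrow> real^'m^'m) set). \<forall>S\<in>T.
            L * mat_grad_inner S (nodal_interp_mat T D (mat_fun g \<circ> \<phi>)) \<phi>
              \<ge> mat_grad_inner S (nodal_interp_mat T D (mat_fun g \<circ> \<phi>))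
                                  (nodal_interp_mat T D (mat_fun g \<circ> \<phi>)))"
proof (intro conjI ballI)
  note M = assms(2) and mono = assms(4) and lip = assms(5)
  have Bneg: "\<And>k l. k \<in> S \<Longrightarrow> l \<in> S \<Longrightarrow> k \<noteq> l \<Longrightarrow> bary S k \<bullet> bary S l \<le> 0" if S: "S \<in> T" for S
  proof -
    fix k l assume k: "k \<in> S" and l: "l \<in> S" and kl: "k \<noteq> l"
    have "dihedral_angle S k l \<le> pi / 2" using assms(3) S k l kl unfolding non_obtuse_mesh_def by blast
    thus "bary S k \<bullet> bary S l \<le> 0" by (rule bary_nonpos[OF mesh_simplex[OF M S] k l])
  qed
  {
    fix q S assume q: "q \<in> Q1 T D" and S: "S \<in> T"
    have SS: "is_simplex_vertices S" using mesh_simplex[OF M S] .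
    let ?u = "g \<circ> q"
    have "(norm (grad_on S (nodal_interp T D ?u)))\<^sup>2 = agrad S ?u \<bullet> agrad S ?u"
      by (simp add: grad_interp[OF M S] power2_norm_eq_inner)
    also have "\<dots> = - (1/2) * (\<Sum>k\<in>S. \<Sum>l\<in>S. (bary S k \<bullet> bary S l) * ((?u k - ?u l) * (?u k - ?u l)))"
      by (rule dot_formula[OF SS])
    also have "\<dots> \<le> L * (- (1/2) * (\<Sum>k\<in>S. \<Sum>l\<in>S. (bary S k \<bullet> bary S l) * ((?u k - ?u l) * (q k - q l))))"
    proof (rule sum_ineq[OF Bneg[OF S]])
      fix k l
      show "(?u k - ?u l) * (?u k - ?u l) \<le> L * ((?u k - ?u l) * (q k - q l))"
        using scalar_ineq[OF mono lip, of "q k" "q l"] by (simp add: power2_eq_square)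
    qed simp_all
    also have "\<dots> = L * (grad_on S (nodal_interp T D ?u) \<bullet> grad_on S q)"
      by (simp add: grad_interp[OF M S] grad_Q1[OF M S q] dot_formula[OF SS])
    finally show "L * (grad_on S (nodal_interp T D (g \<circ> q)) \<bullet> grad_on S q)
              \<ge> (norm (grad_on S (nodal_interp T D (g \<circ> q))))\<^sup>2" .
  }
  {
    fix \<phi> :: "real^'n \<Rightarrow> real^'m^'m" and S assume phi: "\<phi> \<in> S1 T D" and S: "S \<in> T"
    have SS: "is_simplex_vertices S" using mesh_simplex[OF M S] .
    have phiQ: "(\<lambda>x. \<phi> x $ i $ j) \<in> Q1 T D" for i j using phi by (simp add: S1_def)
    have Deq: "D = (\<Union>S\<in>T. convex hull S)" using M unfolding conforming_mesh_def by blast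
    have "S \<subseteq> convex hull S" by (rule hull_subset)
    hence Ssub: "S \<subseteq> D" using Deq S by blast
    have symD: "\<forall>x\<in>D. symmetric_mat (\<phi> x)" using phi unfolding S1_def by blast
    have sym: "transpose (\<phi> k) = \<phi> k" if "k \<in> S" for k
      using symD Ssub that unfolding symmetric_mat_def by blast
    let ?G = "\<lambda>y. mat_fun g (\<phi> y)"
    have eqX: "(\<lambda>x. nodal_interp_mat T D (mat_fun g \<circ> \<phi>) x $ i $ j) = nodal_interp T D (\<lambda>y. ?G y $ i $ j)" for i j
      by (simp add: nodal_interp_mat_def o_def)
    let ?B = "\<lambda>k l. bary S k \<bullet> bary S l"
    have gen: "mat_grad_inner S (nodal_interp_mat T D (mat_fun g \<circ> \<phi>)) \<psi>
       = - (1/2) * (\<Sum>k\<in>S. \<Sum>l\<in>S. ?B k l * (\<Sum>i\<in>UNIV. \<Sum>j\<in>UNIV. (?G k - ?G l) $ i $ j * (\<Psi> k - \<Psi> l) $ i $ j))"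
      if psi: "\<And>i j. grad_on S (\<lambda>x. \<psi> x $ i $ j) = agrad S (\<lambda>x. \<Psi> x $ i $ j)" for \<psi> \<Psi> :: "real^'n \<Rightarrow> real^'m^'m"
    proof -
      have "mat_grad_inner S (nodal_interp_mat T D (mat_fun g \<circ> \<phi>)) \<psi>
          = (\<Sum>i\<in>UNIV. \<Sum>j\<in>UNIV. agrad S (\<lambda>y. ?G y $ i $ j) \<bullet> agrad S (\<lambda>x. \<Psi> x $ i $ j))"
        unfolding mat_grad_inner_def eqX grad_interp[OF M S] psi ..
      also have "\<dots> = (\<Sum>i\<in>UNIV. \<Sum>j\<in>UNIV. - (1/2) * (\<Sum>k\<in>S. \<Sum>l\<in>S. ?B k l * ((?G k - ?G l) $ i $ j * (\<Psi> k - \<Psi> l) $ i $ j)))"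
        unfolding dot_formula[OF SS] by simp
      also have "\<dots> = - (1/2) * (\<Sum>i\<in>UNIV. \<Sum>j\<in>UNIV. \<Sum>k\<in>S. \<Sum>l\<in>S. ?B k l * ((?G k - ?G l) $ i $ j * (\<Psi> k - \<Psi> l) $ i $ j))"
        by (simp only: sum_distrib_left)
      also have "\<dots> = - (1/2) * (\<Sum>k\<in>S. \<Sum>l\<in>S. \<Sum>i\<in>UNIV. \<Sum>j\<in>UNIV. ?B k l * ((?G k - ?G l) $ i $ j * (\<Psi> k - \<Psi> l) $ i $ j))"
        by (rule arg_cong[where f="\<lambda>x. - (1/2) * x"], rule sum4_swap)
      also have "\<dots> = - (1/2) * (\<Sum>k\<in>S. \<Sum>l\<in>S. ?B k l * (\<Sum>i\<in>UNIV. \<Sum>j\<in>UNIV. (?G k - ?G l) $ i $ j * (\<Psi> k - \<Psi> l) $ i $ j))"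
        by (simp only: sum_distrib_left)
      finally show ?thesis .
    qed
    have "mat_grad_inner S (nodal_interp_mat T D (mat_fun g \<circ> \<phi>)) (nodal_interp_mat T D (mat_fun g \<circ> \<phi>))
       = - (1/2) * (\<Sum>k\<in>S. \<Sum>l\<in>S. ?B k l * (\<Sum>i\<in>UNIV. \<Sum>j\<in>UNIV. (?G k - ?G l) $ i $ j * (?G k - ?G l) $ i $ j))"
      by (rule gen) (simp add: eqX grad_interp[OF M S])
    also have "\<dots> \<le> L * (- (1/2) * (\<Sum>k\<in>S. \<Sum>l\<in>S. ?B k l * (\<Sum>i\<in>UNIV. \<Sum>j\<in>UNIV. (?G k - ?G l) $ i $ j * (\<phi> k - \<phi> l) $ i $ j)))"
    proof (rule sum_ineq[OF Bneg[OF S]])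
      fix k l assume "k \<in> S" "l \<in> S"
      then show "(\<Sum>i\<in>UNIV. \<Sum>j\<in>UNIV. (?G k - ?G l) $ i $ j * (?G k - ?G l) $ i $ j)
         \<le> L * (\<Sum>i\<in>UNIV. \<Sum>j\<in>UNIV. (?G k - ?G l) $ i $ j * (\<phi> k - \<phi> l) $ i $ j)"
        using mat_ineq[OF sym sym mono lip, of k l] by (simp add: power2_eq_square)
    qed auto
    also have "\<dots> = L * mat_grad_inner S (nodal_interp_mat T D (mat_fun g \<circ> \<phi>)) \<phi>"
    proof -
      have "mat_grad_inner S (nodal_interp_mat T D (mat_fun g \<circ> \<phi>)) \<phi>
       = - (1/2) * (\<Sum>k\<in>S. \<Sum>l\<in>S. ?B k l * (\<Sum>i\<in>UNIV. \<Sum>j\<in>UNIV. (?G k - ?G l) $ i $ j * (\<phi> k - \<phi> l) $ i $ j))"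
        by (rule gen) (rule grad_Q1[OF M S phiQ])
      thus ?thesis by simp
    qed
    finally show "L * mat_grad_inner S (nodal_interp_mat T D (mat_fun g \<circ> \<phi>)) \<phi>
              \<ge> mat_grad_inner S (nodal_interp_mat T D (mat_fun g \<circ> \<phi>))
                                  (nodal_interp_mat T D (mat_fun g \<circ> \<phi>))" .
  }
qed


end
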